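(* Let $\mathcal{V}$ be a veering triangulation, $w$ a weight system, $F_w=\{f:w_f>0\}$, and $\varphi\in\mathrm{Aut}^+(\mathcal{Q}_{\mathcal{V},w}\mid\tau_{\mathcal{V},w})$. If $e$ is the large edge of $f^+\in F_w^+$, then the regluing map sends $e$ to the large edge of $r^\varphi(f^+)\in F_w^-$.
   Context: Taut and veering structures. $\mathcal{V}$ is an ideal triangulation $\mathcal{T}$ of a compact oriented 3-manifold with a taut structure (a coorientation of faces such that each tetrahedron has two faces cooriented out—top faces, meeting in the top diagonal—and two cooriented in—bottom faces, meeting in the bottom diagonal—and every edge is the top diagonal of exactly one and the bottom diagonal of exactly one tetrahedron) and a veering structure (a red/blue edge coloring such that in each tetrahedron, for a top face with edges $e_0,e_1,e_2$ counterclockwise viewed from above and $e_0$ the top diagonal, $e_1$ is red, $e_2$ blue; for a bottom face with edges $e_0,e_1,e_2$ counterclockwise viewed from above and $e_0$ the bottom diagonal, $e_1$ is blue, $e_2$ red). The large edge of a face $f$ is the edge of $f$ that is the bottom diagonal of the tetrahedron of which $f$ is a bottom face. Carried surface. A weight system $w$ is a nonzero nonnegative integral solution of the branch equations (for each edge, faces on its two sides—separated by the tetrahedra where it is top/bottom diagonal—have equal weight sums). Pulling apart sheets of $\sum w_f f$ gives a surface triangulated by $\mathcal{Q}_{\mathcal{V},w}$ with $w_f$ copies of each face, ordered from lowermost $L(f)$ to uppermost $U(f)$; $\mathfrak{a}(y)$ is the copy immediately above $y$; the large edge of a copy of $f$ is the corresponding copy of the large edge of $f$, and $\tau_{\mathcal{V},w}$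 is the dual train track whose large branch in each triangle is dual to its large edge. $\mathrm{Aut}^+(\mathcal{Q}_{\mathcal{V},w}\mid\tau_{\mathcal{V},w})$ consists of orientation-preserving combinatorial automorphisms (bijection $\varphi$ of triangles with edge bijections $\varphi_g$ compatible with edge identifications) such that $\varphi_g$ maps the large edge of $g$ to the large edge of $\varphi(g)$ for all triangles $g$. Regluing map. Cutting $\mathcal{T}$ along the faces of $F_w$ gives, for each $f\in F_w$, a face $f^+\in F_w^+$ (top face of the tetrahedron below $f$) and $f^-\in F_w^-$ (bottom face of the tetrahedron above $f$), both naturally identified with $f$; the large edge of $f^\pm$ is the one corresponding to the large edge of $f$. For $f\in F_w$ let $g_1=\varphi(L(f))$ and, while $g_i$ is not an uppermost copy, $g_{i+1}=\varphi(\mathfrak{a}(g_i))$; it ends at $g_k=U(f')$. Then $r^\varphi(f^+)=f'^-$, and the regluing map sends an edge of $f^+$ to the edge of $f'^-$ obtained by the composite: edge of $f$ $\to$ corresponding edge of $L(f)$ $\to$ (by $\varphi_{L(f)}$) edge of $g_1$ $\to$ (by $\mathfrak{a}$) edge of $\mathfrak{a}(g_1)$ $\to$ (by $\varphi_{\mathfrak{a}(g_1)}$) edge of $g_2\to\cdots\to$ edge of $g_k=U(f')$ $\to$ corresponding edge of $f'$. *)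

theory Defs
  imports Main
begin

text \<open>
  Each face is a triangle whose three sides are indexed 0,1,2
  (counterclockwise viewed from above, via the coorientation).  The function
  large f < 3 gives the side of f that is its large edge (the bottom diagonal of the
  tetrahedron of which f is a bottom face).  The faces f+ and f- obtained by cutting
  are naturally identified with f, so their sides are the sides of f and their large
  side is large f.

  The triangles of Q_{V,w} are the copies (f,i) with f in F and i < w f, numbered
  from the lowermost copy L(f) = (f,0) to the uppermost copy U(f) = (f, w f - 1).
  The sides of a copy are the sides of f; the large side of (f,i) is large f.
  The copy immediately above (f,i) is (f,i+1); the induced map on sides is the identity.
\<close>

definition copies :: "'f set \<Rightarrow> ('f \<Rightarrow> nat) \<Rightarrow> ('f \<times> nat) set" where
  "copies F w = {(f, i). f \<in> F \<and> i < w f}"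

definition F_w :: "'f set \<Rightarrow> ('f \<Rightarrow> nat) \<Rightarrow> 'f set" where
  "F_w F w = {f \<in> F. 0 < w f}"

definition lowermost :: "'f \<Rightarrow> 'f \<times> nat" where
  "lowermost f = (f, 0)"

definition is_uppermost :: "('f \<Rightarrow> nat) \<Rightarrow> 'f \<times> nat \<Rightarrow> bool" where
  "is_uppermost w g \<longleftrightarrow> snd g = w (fst g) - 1"

definition copy_above :: "'f \<times> nat \<Rightarrow> 'f \<times> nat" where
  "copy_above g = (fst g, Suc (snd g))"

text \<open>An orientation preserving bijection of the sides {0,1,2} of a triangle
  (counterclockwise labelled) is a cyclic rotation.\<close>
definition side_rotation :: "(nat \<Rightarrow> nat) \<Rightarrow> bool" where
  "side_rotation \<sigma> \<longleftrightarrow> (\<exists>k<3. \<forall>j<3. \<sigma> j = (j + k) mod 3)"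

definition aut_plus ::
  "'f set \<Rightarrow> ('f \<Rightarrow> nat) \<Rightarrow> ('f \<Rightarrow> nat) \<Rightarrow> ('f \<times> nat \<Rightarrow> 'f \<times> nat)
     \<Rightarrow> ('f \<times> nat \<Rightarrow> nat \<Rightarrow> nat) \<Rightarrow> bool" where
  "aut_plus F w large \<phi> \<phi>s \<longleftrightarrow>
     bij_betw \<phi> (copies F w) (copies F w) \<and>
     (\<forall>g \<in> copies F w. side_rotation (\<phi>s g) \<and>
                        \<phi>s g (large (fst g)) = large (fst (\<phi> g)))"

text \<open>The regluing chain: pairs (g_i, side of g_i).  Start at g_1 = phi(L f) with the
  image under phis (L f) of side j of f; one step passes to the copy above and applies
  phi again.\<close>
definition reglue_step ::
  "('f \<times> nat \<Rightarrow> 'f \<times> nat) \<Rightarrow> ('f \<times> nat \<Rightarrow> nat \<Rightarrow> nat)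
     \<Rightarrow> ('f \<times> nat) \<times> nat \<Rightarrow> ('f \<times> nat) \<times> nat" where
  "reglue_step \<phi> \<phi>s p = (\<phi> (copy_above (fst p)), \<phi>s (copy_above (fst p)) (snd p))"

definition reglue_seq ::
  "('f \<times> nat \<Rightarrow> 'f \<times> nat) \<Rightarrow> ('f \<times> nat \<Rightarrow> nat \<Rightarrow> nat) \<Rightarrow> 'f \<Rightarrow> nat
     \<Rightarrow> nat \<Rightarrow> ('f \<times> nat) \<times> nat" where
  "reglue_seq \<phi> \<phi>s f j n =
     (reglue_step \<phi> \<phi>s ^^ n) (\<phi> (lowermost f), \<phi>s (lowermost f) j)"

end

theory Submission
  imports Defs
begin

lemma seq_Suc: "reglue_seq \<phi> \<phi>s f j (Suc n) = reglue_step \<phi> \<phi>s (reglue_seq \<phi> \<phi>s f j n)"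
  unfolding reglue_seq_def by simp

lemma seq_0: "reglue_seq \<phi> \<phi>s f j 0 = (\<phi> (lowermost f), \<phi>s (lowermost f) j)"
  unfolding reglue_seq_def by simp

lemma above_in:
  assumes "g \<in> copies F w" "\<not> is_uppermost w g"
  shows "copy_above g \<in> copies F w"
  using assms unfolding copies_def copy_above_def is_uppermost_def by auto

theorem lemma3p18:
  fixes F :: "'f set" and w :: "'f \<Rightarrow> nat" and large :: "'f \<Rightarrow> nat"
    and \<phi> :: "'f \<times> nat \<Rightarrow> 'f \<times> nat" and \<phi>s :: "'f \<times> nat \<Rightarrow> nat \<Rightarrow> nat"
    and f :: 'f
  assumes "finite F"
    and "\<forall>h \<in> F. large h < 3"
    and "\<exists>h \<in> F. 0 < w h"
    and "aut_plus F w large \<phi> \<phi>s"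
    and "f \<in> F_w F w"
  shows "\<exists>k. is_uppermost w (fst (reglue_seq \<phi> \<phi>s f (large f) k))
            \<and> (\<forall>i<k. \<not> is_uppermost w (fst (reglue_seq \<phi> \<phi>s f (large f) i)))
            \<and> snd (reglue_seq \<phi> \<phi>s f (large f) k)
                = large (fst (fst (reglue_seq \<phi> \<phi>s f (large f) k)))"
proof -
  define s where "s = reglue_seq \<phi> \<phi>s f (large f)"
  define g where "g n = fst (s n)" for n
  have bij: "bij_betw \<phi> (copies F w) (copies F w)"
    and rot: "\<And>h. h \<in> copies F w \<Longrightarrow> \<phi>s h (large (fst h)) = large (fst (\<phi> h))"
    using assms(4) unfolding aut_plus_def by auto
  have inj: "inj_on \<phi> (copies F w)" using bij bij_betw_def by blast
  have mapsto: "\<And>h. h \<in> copies F w \<Longrightarrow> \<phi> h \<in> copies F w"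
    using bij bij_betwE by blast
  have L: "lowermost f \<in> copies F w"
    using assms(5) unfolding F_w_def copies_def lowermost_def by auto
  have g0: "g 0 = \<phi> (lowermost f)" unfolding g_def s_def seq_0 by simp
  have gS: "g (Suc n) = \<phi> (copy_above (g n))" for n
    unfolding g_def s_def seq_Suc reglue_step_def by simp
  have sS: "snd (s (Suc n)) = \<phi>s (copy_above (g n)) (snd (s n))" for n
    unfolding g_def s_def seq_Suc reglue_step_def by simp
  have inv: "(\<forall>i<n. \<not> is_uppermost w (g i)) \<longrightarrow> g n \<in> copies F w \<and> snd (s n) = large (fst (g n))" for n
  proof (induction n)
    case 0
    show ?case using L mapsto rot[OF L] g0
      unfolding g_def s_def seq_0 by (simp add: lowermost_def)
  next
    case (Suc n)
    show ?case
    proof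
      assume H: "\<forall>i<Suc n. \<not> is_uppermost w (g i)"
      then have IH: "g n \<in> copies F w" "snd (s n) = large (fst (g n))" using Suc by auto
      have A: "copy_above (g n) \<in> copies F w" using above_in[OF IH(1)] H by auto
      have "fst (copy_above (g n)) = fst (g n)" by (simp add: copy_above_def)
      then show "g (Suc n) \<in> copies F w \<and> snd (s (Suc n)) = large (fst (g (Suc n)))"
        using A mapsto rot[OF A] gS sS IH by metis
    qed
  qed
  have ex: "\<exists>k. is_uppermost w (g k)"
  proof (rule ccontr)
    assume N: "\<not> ?thesis"
    then have C: "g n \<in> copies F w" for n using inv by auto
    have fin: "finite (copies F w)"
    proof -
      have "copies F w \<subseteq> Sigma F (\<lambda>h. {..<w h})" unfolding copies_def by auto
      then show ?thesis using assms(1) by (meson finite_SigmaI finite_lessThan finite_subset)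
    qed
    have "\<not> inj g"
    proof
      assume "inj g"
      then have "infinite (range g)" using finite_imageD by blast
      moreover have "range g \<subseteq> copies F w" using C by auto
      ultimately show False using fin finite_subset by blast
    qed
    have D: "\<forall>j>i. g i \<noteq> g j" for i
    proof (induction i)
      case 0
      show ?case
      proof (intro allI impI)
        fix j :: nat assume "0 < j"
        then obtain j' where j: "j = Suc j'" using not0_implies_Suc by blast
        have A: "copy_above (g j') \<in> copies F w" using above_in[OF C] N by auto
        show "g 0 \<noteq> g j"
        proof
          assume "g 0 = g j"
          then have "\<phi> (lowermost f) = \<phi> (copy_above (g j'))" using g0 gS j by simp
          then have "lowermost f = copy_above (g j')" using inj_onD[OF inj _ L A] by blast
          then show False by (simp add: lowermost_def copy_above_def)
        qed
      qed
    next
      case (Suc i)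
      show ?case
      proof (intro allI impI)
        fix j :: nat assume "Suc i < j"
        then obtain j' where j: "j = Suc j'" and ij: "i < j'" using less_imp_Suc_add by blast
        have A: "copy_above (g j') \<in> copies F w" using above_in[OF C] N by auto
        have B: "copy_above (g i) \<in> copies F w" using above_in[OF C] N by auto
        show "g (Suc i) \<noteq> g j"
        proof
          assume "g (Suc i) = g j"
          then have "\<phi> (copy_above (g i)) = \<phi> (copy_above (g j'))" using gS j by simp
          then have "copy_above (g i) = copy_above (g j')" using inj_onD[OF inj _ B A] by blast
          then have "g i = g j'" by (simp add: copy_above_def prod_eq_iff)
          then show False using Suc.IH ij by blast
        qed
      qed
    qed
    have "inj g"
    proof (rule injI)
      fix x y assume "g x = g y"
      then show "x = y" using D[of x] D[of y] by (metis linorder_neqE_nat)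
    qed
    then show False using \<open>\<not> inj g\<close> by blast
  qed
  define k where "k = (LEAST k. is_uppermost w (g k))"
  have k1: "is_uppermost w (g k)" unfolding k_def using ex LeastI_ex by metis
  have k2: "\<forall>i<k. \<not> is_uppermost w (g i)" unfolding k_def using not_less_Least by blast
  have k3: "snd (s k) = large (fst (g k))" using inv k2 by blast
  show ?thesis using k1 k2 k3 unfolding g_def s_def by blast
qed

end
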